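(* Let $V=\{0,\tfrac12,1\}$ and consider any sentential language with an atomic expressive semantics whose consequence relation is induced by the truth-relation $ss\cap tt$. Then no binary connective of the language (with any truth function) is a G-conditional.
   Context: $ss\cap tt=\models_{\{1\},\{1\}}\cap\models_{\{1,\frac12\},\{1,\frac12\}}$, where $\gamma\models_{\mathcal{D}_p,\mathcal{D}_c}\delta$ iff ($\gamma\subseteq\mathcal{D}_p\Rightarrow\delta\cap\mathcal{D}_c\neq\emptyset$). A semantics: set of valuations mapping atoms to $V$, interpreting each connective by a truth function fixed across valuations, extended compositionally, such that every assignment of values to finitely many distinct atoms is realized. Atomic expressive: for every $\gamma\subseteq V$ there are a set of formulas $\Gamma$ and a valuation $v$ with $v(\Gamma)=\gamma$. Consequence: $\Gamma\vdash\Delta$ iff $v(\Gamma)\models v(\Delta)$ for all $v$; $\Gamma,A$ denotes $\Gamma\cup\{A\}$. A G-conditional $\to$ satisfies for all $\Gamma,\Delta,A,B$: $\Gamma\vdash A\to B,\Delta$ iff $\Gamma,A\vdash B,\Delta$; and $\Gamma,A\to B\vdash\Delta$ iff ($\Gamma\vdash A,\Delta$ and $\Gamma,B\vdash\Delta$). *)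

theory Defs
  imports Main
begin

datatype tv = Zero | Half | One

datatype ('a, 'c) form = Atom 'a | Conn 'c "('a, 'c) form list"

inductive wf :: "('c \<Rightarrow> nat) \<Rightarrow> ('a, 'c) form \<Rightarrow> bool" for ar where
  wf_Atom: "wf ar (Atom p)"
| wf_Conn: "length As = ar c \<Longrightarrow> (\<forall>A\<in>set As. wf ar A) \<Longrightarrow> wf ar (Conn c As)"

fun eval :: "('c \<Rightarrow> tv list \<Rightarrow> tv) \<Rightarrow> ('a \<Rightarrow> tv) \<Rightarrow> ('a, 'c) form \<Rightarrow> tv" where
  "eval I e (Atom p) = e p"
| "eval I e (Conn c As) = I c (map (eval I e) As)"

definition models_D :: "tv set \<Rightarrow> tv set \<Rightarrow> tv set \<Rightarrow> tv set \<Rightarrow> bool" where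
  "models_D Dp Dc \<gamma> \<delta> \<longleftrightarrow> (\<gamma> \<subseteq> Dp \<longrightarrow> \<delta> \<inter> Dc \<noteq> {})"

definition ss_cap_tt :: "tv set \<Rightarrow> tv set \<Rightarrow> bool" where
  "ss_cap_tt \<gamma> \<delta> \<longleftrightarrow> models_D {One} {One} \<gamma> \<delta> \<and> models_D {One, Half} {One, Half} \<gamma> \<delta>"

text \<open>A semantics is given by a set S of atom assignments (each extended compositionally
  via eval I); every assignment of values to finitely many atoms must be realized.\<close>
definition is_semantics :: "('a \<Rightarrow> tv) set \<Rightarrow> bool" where
  "is_semantics S \<longleftrightarrow> (\<forall>X f. finite X \<longrightarrow> (\<exists>e\<in>S. \<forall>p\<in>X. e p = f p))"

definition atomic_expressive :: "('c \<Rightarrow> nat) \<Rightarrow> ('c \<Rightarrow> tv list \<Rightarrow> tv) \<Rightarrow> ('a \<Rightarrow> tv) set \<Rightarrow> bool" where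
  "atomic_expressive ar I S \<longleftrightarrow>
     (\<forall>\<gamma>. \<exists>\<Gamma>. \<Gamma> \<subseteq> {A. wf ar A} \<and> (\<exists>e\<in>S. eval I e ` \<Gamma> = \<gamma>))"

definition cons :: "('c \<Rightarrow> tv list \<Rightarrow> tv) \<Rightarrow> ('a \<Rightarrow> tv) set
    \<Rightarrow> ('a, 'c) form set \<Rightarrow> ('a, 'c) form set \<Rightarrow> bool" where
  "cons I S \<Gamma> \<Delta> \<longleftrightarrow> (\<forall>e\<in>S. ss_cap_tt (eval I e ` \<Gamma>) (eval I e ` \<Delta>))"

definition G_conditional :: "('c \<Rightarrow> nat) \<Rightarrow> ('c \<Rightarrow> tv list \<Rightarrow> tv) \<Rightarrow> ('a \<Rightarrow> tv) set \<Rightarrow> 'c \<Rightarrow> bool" where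
  "G_conditional ar I S c \<longleftrightarrow>
     (\<forall>\<Gamma> \<Delta> A B. \<Gamma> \<subseteq> {X. wf ar X} \<longrightarrow> \<Delta> \<subseteq> {X. wf ar X} \<longrightarrow> wf ar A \<longrightarrow> wf ar B \<longrightarrow>
        (cons I S \<Gamma> (insert (Conn c [A, B]) \<Delta>) \<longleftrightarrow> cons I S (insert A \<Gamma>) (insert B \<Delta>)) \<and>
        (cons I S (insert (Conn c [A, B]) \<Gamma>) \<Delta> \<longleftrightarrow>
           (cons I S \<Gamma> (insert A \<Delta>) \<and> cons I S (insert B \<Gamma>) \<Delta>)))"

end

theory Submission
  imports Defs
begin

lemma sct_triv: "x \<in> \<gamma> \<Longrightarrow> x \<in> \<delta> \<Longrightarrow> ss_cap_tt \<gamma> \<delta>"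
  unfolding ss_cap_tt_def models_D_def by (cases x) auto

lemma cons_triv: "A \<in> \<Gamma> \<Longrightarrow> A \<in> \<Delta> \<Longrightarrow> cons I S \<Gamma> \<Delta>"
  unfolding cons_def by (auto intro: sct_triv)

theorem theorem4p4:
  fixes ar :: "'c \<Rightarrow> nat" and I :: "'c \<Rightarrow> tv list \<Rightarrow> tv"
    and S :: "('a \<Rightarrow> tv) set" and c :: 'c
  assumes "is_semantics S"
    and "atomic_expressive ar I S"
    and "ar c = 2"
  shows "\<not> G_conditional ar I S c"
proof
  assume G: "G_conditional ar I S c"
  obtain \<Gamma> e where \<Gamma>: "\<Gamma> \<subseteq> {A. wf ar A}" and e: "e \<in> S" and ev: "eval I e ` \<Gamma> = {Zero, Half}"
    using assms(2)[unfolded atomic_expressive_def, rule_format, of "{Zero, Half}"] by blast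
  obtain A where A: "A \<in> \<Gamma>" "eval I e A = Half" using ev by (metis imageE insertCI)
  obtain B where B: "B \<in> \<Gamma>" "eval I e B = Zero" using ev by (metis imageE insertCI)
  have wA: "wf ar A" and wB: "wf ar B" using A B \<Gamma> by auto
  have wimp: "wf ar (Conn c [X, Y])" if "wf ar X" "wf ar Y" for X Y
    using that assms(3) by (auto intro: wf.intros)
  define AB where "AB = Conn c [A, B]"
  define D where "D = Conn c [AB, B]"
  have wAB: "wf ar AB" unfolding AB_def using wA wB wimp by blast
  have R: "cons I S \<Gamma>' (insert (Conn c [X, Y]) \<Delta>') \<longleftrightarrow> cons I S (insert X \<Gamma>') (insert Y \<Delta>')"
    if "\<Gamma>' \<subseteq> {X. wf ar X}" "\<Delta>' \<subseteq> {X. wf ar X}" "wf ar X" "wf ar Y" for \<Gamma>' \<Delta>' X Y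
    using G[unfolded G_conditional_def, rule_format, OF that] by (rule conjunct1)
  have L: "cons I S (insert (Conn c [X, Y]) \<Gamma>') \<Delta>' \<longleftrightarrow>
           (cons I S \<Gamma>' (insert X \<Delta>') \<and> cons I S (insert Y \<Gamma>') \<Delta>')"
    if "\<Gamma>' \<subseteq> {X. wf ar X}" "\<Delta>' \<subseteq> {X. wf ar X}" "wf ar X" "wf ar Y" for \<Gamma>' \<Delta>' X Y
    using G[unfolded G_conditional_def, rule_format, OF that] by (rule conjunct2)
  have "cons I S {A} (insert B {A})" by (rule cons_triv) auto
  hence "cons I S {} (insert AB {A})" using R[of "{}" "{A}" A B] wA wB unfolding AB_def by simp
  hence "ss_cap_tt {} {eval I e AB, Half}" using e A unfolding cons_def by auto
  hence ABe: "eval I e AB = One" unfolding ss_cap_tt_def models_D_def by (cases "eval I e AB") auto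
  have "cons I S {AB} (insert AB {B})" by (rule cons_triv) auto
  moreover have "cons I S (insert B {AB}) {B}" by (rule cons_triv) auto
  ultimately have "cons I S (insert D {AB}) {B}" using L[of "{AB}" "{B}" AB B] wAB wB unfolding D_def by simp
  hence "ss_cap_tt {eval I e D, One} {Zero}" using e B ABe unfolding cons_def by auto
  hence De: "eval I e D = Zero" unfolding ss_cap_tt_def models_D_def by (cases "eval I e D") auto
  have "cons I S {AB} (insert B {AB})" by (rule cons_triv) auto
  hence "cons I S {} (insert D {AB})" using R[of "{}" "{AB}" AB B] wAB wB unfolding D_def by simp
  hence "cons I S {} (insert AB {D})" by (simp only: insert_commute)
  moreover have "wf ar D" unfolding D_def using wAB wB wimp by blast
  ultimately have "cons I S {A} (insert B {D})" using R[of "{}" "{D}" A B] wA wB unfolding AB_def by simp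
  hence "ss_cap_tt {Half} {Zero}" using e A B De unfolding cons_def by auto
  thus False unfolding ss_cap_tt_def models_D_def by auto
qed

end
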